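(* For the discrete scheme described in the context (any $n\ge1$, $\delta t>0$): (i) $z\mapsto\theta^n(t,z)$ is nondecreasing for every $t\in[0,T)$; (ii) with $\hat\theta^n(t,z)=\theta^n(t,F^n(t,z))$ and $\hat q^n(t,z)=q^n(t,F^n(t,z))$, one has $\hat\theta^n(t,z)+\hat q^n(t,z)=\theta^n_0(z)+q^n_0(z)$; (iii) $t\mapsto\hat\theta^n(t,z)$ is nondecreasing for every $z\in[0,1)$; (iv) $q^n(t,z)\le Q^{sat}(\theta^n(t,z),z,k\delta t)$, where $k$ is the integer with $k\delta t\le t<(k+1)\delta t$.
   Context: $Q^{sat}:\mathbb{R}^3\to\mathbb{R}$ is smooth with $\partial_\theta Q^{sat}>0$, $\partial_zQ^{sat}<0$. $\Theta(w,z,t)$ is the solution $\theta$ of $\theta+Q^{sat}(\theta,z,t)=w$ (assumed well defined), with $\partial_w\Theta>0$, $\partial_z\Theta>0$. Discrete scheme. Fix $T>0$, $n\ge1$, $\delta t>0$, $z_i=i/n$, $J_i=[\frac{i-1}{n},\frac in)$. There are $n$ parcels $j=1,\dots,n$; initially parcel $j$ is at position $j$ with value $\theta^n_j$, where $\theta^n_1\le\dots\le\theta^n_n$ and $q^n_j\le Q^{sat}(\theta^n_j,z_j,0)$; parcel $j$ carries the fixed number $\theta^M_j=\theta^n_j+q^n_j$. One time step from $k\delta t$ to $(k+1)\delta t$, with $\tau=(k+1)\delta t$: positions $m=n,\dots,1$ are processed in this order. At stage $m$, with current configuration (parcel $p(i)$ at position $i$ with value $\vartheta_i$), position $i$ is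 wet if $\vartheta_i<\Theta(\theta^M_{p(i)},z_i,\tau)$; a wet position $i_0\le m$ is eligible if for every $i$ with $i_0<i\le m$, either $i$ is not wet and $\vartheta_i<\Theta(\theta^M_{p(i_0)},z_i,\tau)$, or $i$ is wet and $\theta^M_{p(i_0)}>\theta^M_{p(i)}$. If some position is eligible, let $i_*$ be the eligible position whose parcel has the largest $\theta^M$ (largest position in case of ties); that parcel moves to position $m$ with new value $\Theta(\theta^M_{p(i_* )},z_m,\tau)$, the parcels at $i_*+1,\dots,m$ move down one position keeping their values, others unchanged; otherwise nothing changes. After stage $1$ one has the configuration at time $(k+1)\delta t$. Let $\alpha_{k\delta t}(j)$ be the position of parcel $j$ after $k$ steps, $\theta^n_i(k\delta t)$ the value at position $i$, and $q^n_i(k\delta t)=\theta^M_p-\theta^n_i(k\delta t)$, $p$ the parcel at position $i$. For $k\delta t\le t<(k+1)\delta t$ and $z\in J_j$: $\theta^n(t,z)=\theta^n_j(k\delta t)$, $q^n(t,z)=q^n_j(k\delta t)$, $F^n(t,z)=z-z_j+z_{\alpha_{k\delta t}(j)}$, $\theta^n_0(z)=\theta^n_j$, $q^n_0(z)=q^n_j$. *)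

theory Defs
  imports "HOL-Analysis.Analysis"
begin

text \<open>A configuration is a pair (p, v):
  p i is the parcel at position i, v i the value at position i (positions 1..n).
  thM is the fixed number carried by each parcel; Th is the function Theta.\<close>

type_synonym config = "(nat \<Rightarrow> nat) \<times> (nat \<Rightarrow> real)"

definition zpos :: "nat \<Rightarrow> nat \<Rightarrow> real" where
  "zpos n i = real i / real n"

definition wet :: "(real \<Rightarrow> real \<Rightarrow> real \<Rightarrow> real) \<Rightarrow> (nat \<Rightarrow> real) \<Rightarrow> nat \<Rightarrow> real
    \<Rightarrow> config \<Rightarrow> nat \<Rightarrow> bool" where
  "wet Th thM n tau c i = (snd c i < Th (thM (fst c i)) (zpos n i) tau)"

definition eligible :: "(real \<Rightarrow> real \<Rightarrow> real \<Rightarrow> real) \<Rightarrow> (nat \<Rightarrow> real) \<Rightarrow> nat \<Rightarrow> real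
    \<Rightarrow> config \<Rightarrow> nat \<Rightarrow> nat \<Rightarrow> bool" where
  "eligible Th thM n tau c m i0 =
     (1 \<le> i0 \<and> i0 \<le> m \<and> wet Th thM n tau c i0 \<and>
      (\<forall>i. i0 < i \<and> i \<le> m \<longrightarrow>
          ((\<not> wet Th thM n tau c i \<and> snd c i < Th (thM (fst c i0)) (zpos n i) tau) \<or>
           (wet Th thM n tau c i \<and> thM (fst c i0) > thM (fst c i)))))"

definition chosen :: "(real \<Rightarrow> real \<Rightarrow> real \<Rightarrow> real) \<Rightarrow> (nat \<Rightarrow> real) \<Rightarrow> nat \<Rightarrow> real
    \<Rightarrow> config \<Rightarrow> nat \<Rightarrow> nat" where
  "chosen Th thM n tau c m =
     (GREATEST i. eligible Th thM n tau c m i \<and>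
        (\<forall>j. eligible Th thM n tau c m j \<longrightarrow> thM (fst c j) \<le> thM (fst c i)))"

definition stage :: "(real \<Rightarrow> real \<Rightarrow> real \<Rightarrow> real) \<Rightarrow> (nat \<Rightarrow> real) \<Rightarrow> nat \<Rightarrow> real
    \<Rightarrow> nat \<Rightarrow> config \<Rightarrow> config" where
  "stage Th thM n tau m c =
     (if \<exists>i. eligible Th thM n tau c m i then
        (let s = chosen Th thM n tau c m in
          ((\<lambda>k. if k = m then fst c s else if s \<le> k \<and> k < m then fst c (k + 1) else fst c k),
           (\<lambda>k. if k = m then Th (thM (fst c s)) (zpos n m) tau
                 else if s \<le> k \<and> k < m then snd c (k + 1) else snd c k)))
      else c)"

fun sweep :: "(real \<Rightarrow> real \<Rightarrow> real \<Rightarrow> real) \<Rightarrow> (nat \<Rightarrow> real) \<Rightarrow> nat \<Rightarrow> real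
    \<Rightarrow> nat \<Rightarrow> config \<Rightarrow> config" where
  "sweep Th thM n tau 0 c = c"
| "sweep Th thM n tau (Suc m) c = sweep Th thM n tau m (stage Th thM n tau (Suc m) c)"

fun cfg :: "(real \<Rightarrow> real \<Rightarrow> real \<Rightarrow> real) \<Rightarrow> (nat \<Rightarrow> real) \<Rightarrow> nat \<Rightarrow> real
    \<Rightarrow> (nat \<Rightarrow> real) \<Rightarrow> nat \<Rightarrow> config" where
  "cfg Th thM n dt th0 0 = ((\<lambda>i. i), th0)"
| "cfg Th thM n dt th0 (Suc k) =
     sweep Th thM n (real (Suc k) * dt) n (cfg Th thM n dt th0 k)"

definition alpha :: "config \<Rightarrow> nat \<Rightarrow> nat \<Rightarrow> nat" where
  "alpha c n j = (THE i. 1 \<le> i \<and> i \<le> n \<and> fst c i = j)"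

text \<open>Index j with z in J_j = [(j-1)/n, j/n), and k with k dt <= t < (k+1) dt.\<close>
definition cell :: "nat \<Rightarrow> real \<Rightarrow> nat" where
  "cell n z = nat \<lfloor>z * real n\<rfloor> + 1"

definition tindex :: "real \<Rightarrow> real \<Rightarrow> nat" where
  "tindex dt t = nat \<lfloor>t / dt\<rfloor>"

definition theta_n :: "(real \<Rightarrow> real \<Rightarrow> real \<Rightarrow> real) \<Rightarrow> (nat \<Rightarrow> real) \<Rightarrow> nat \<Rightarrow> real
    \<Rightarrow> (nat \<Rightarrow> real) \<Rightarrow> real \<Rightarrow> real \<Rightarrow> real" where
  "theta_n Th thM n dt th0 t z = snd (cfg Th thM n dt th0 (tindex dt t)) (cell n z)"

definition q_n :: "(real \<Rightarrow> real \<Rightarrow> real \<Rightarrow> real) \<Rightarrow> (nat \<Rightarrow> real) \<Rightarrow> nat \<Rightarrow> real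
    \<Rightarrow> (nat \<Rightarrow> real) \<Rightarrow> real \<Rightarrow> real \<Rightarrow> real" where
  "q_n Th thM n dt th0 t z =
     (let c = cfg Th thM n dt th0 (tindex dt t) in thM (fst c (cell n z)) - snd c (cell n z))"

definition F_n :: "(real \<Rightarrow> real \<Rightarrow> real \<Rightarrow> real) \<Rightarrow> (nat \<Rightarrow> real) \<Rightarrow> nat \<Rightarrow> real
    \<Rightarrow> (nat \<Rightarrow> real) \<Rightarrow> real \<Rightarrow> real \<Rightarrow> real" where
  "F_n Th thM n dt th0 t z =
     (let c = cfg Th thM n dt th0 (tindex dt t); j = cell n z in
        z - zpos n j + zpos n (alpha c n j))"

definition theta0_n :: "nat \<Rightarrow> (nat \<Rightarrow> real) \<Rightarrow> real \<Rightarrow> real" where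
  "theta0_n n th0 z = th0 (cell n z)"

definition q0_n :: "nat \<Rightarrow> (nat \<Rightarrow> real) \<Rightarrow> real \<Rightarrow> real" where
  "q0_n n q0 z = q0 (cell n z)"

end

theory Submission
  imports Defs
begin


lemma zpos_mono: "1 \<le> n \<Longrightarrow> i \<le> j \<Longrightarrow> zpos n i \<le> zpos n j"
  unfolding zpos_def by (simp add: divide_right_mono)

locale sch =
  fixes Th :: "real \<Rightarrow> real \<Rightarrow> real \<Rightarrow> real" and thM :: "nat \<Rightarrow> real" and n :: nat
  assumes ThW: "\<And>a b z t. a < b \<Longrightarrow> Th a z t < Th b z t"
    and ThZ: "\<And>w z1 z2 t. z1 < z2 \<Longrightarrow> Th w z1 t < Th w z2 t"
    and npos: "n \<ge> 1"
begin

lemma ThW_le: "a \<le> b \<Longrightarrow> Th a z t \<le> Th b z t"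
  using ThW[of a b z t] by (cases "a = b") auto

lemma ThZ_le: "z1 \<le> z2 \<Longrightarrow> Th w z1 t \<le> Th w z2 t"
  using ThZ[of z1 z2 w t] by (cases "z1 = z2") auto

lemma ThP_le: "i \<le> j \<Longrightarrow> Th w (zpos n i) t \<le> Th w (zpos n j) t"
  using ThZ_le zpos_mono npos by blast

lemma chosen_props:
  assumes "\<exists>i. eligible Th thM n tau c m i"
  shows "eligible Th thM n tau c m (chosen Th thM n tau c m)"
    "\<And>j. eligible Th thM n tau c m j \<Longrightarrow> thM (fst c j) \<le> thM (fst c (chosen Th thM n tau c m))"
proof -
  let ?E = "{i. eligible Th thM n tau c m i}"
  have fin: "finite ?E" by (rule finite_subset[of _ "{..m}"]) (auto simp: eligible_def)
  have ne: "?E \<noteq> {}" using assms by auto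
  let ?M = "Max ((\<lambda>i. thM (fst c i)) ` ?E)"
  have "?M \<in> (\<lambda>i. thM (fst c i)) ` ?E" using fin ne by (intro Max_in) auto
  then obtain i0 where i0: "eligible Th thM n tau c m i0" "thM (fst c i0) = ?M" by auto
  have le: "\<And>j. eligible Th thM n tau c m j \<Longrightarrow> thM (fst c j) \<le> ?M" using fin by (intro Max_ge) auto
  let ?P = "\<lambda>i. eligible Th thM n tau c m i \<and> (\<forall>j. eligible Th thM n tau c m j \<longrightarrow> thM (fst c j) \<le> thM (fst c i))"
  have "?P i0" using i0 le by auto
  moreover have "\<And>y. ?P y \<Longrightarrow> y \<le> m" by (auto simp: eligible_def)
  ultimately have "?P (GREATEST i. ?P i)" by (rule GreatestI_nat)
  thus "eligible Th thM n tau c m (chosen Th thM n tau c m)"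
    "\<And>j. eligible Th thM n tau c m j \<Longrightarrow> thM (fst c j) \<le> thM (fst c (chosen Th thM n tau c m))"
    unfolding chosen_def by auto
qed

lemma chosen_le: "\<exists>i. eligible Th thM n tau c m i \<Longrightarrow> 1 \<le> chosen Th thM n tau c m \<and> chosen Th thM n tau c m \<le> m"
  using chosen_props(1) unfolding eligible_def by blast

lemma stage_fst: "\<exists>i. eligible Th thM n tau c m i \<Longrightarrow> s = chosen Th thM n tau c m \<Longrightarrow>
  fst (stage Th thM n tau m c) k = (if k = m then fst c s else if s \<le> k \<and> k < m then fst c (Suc k) else fst c k)"
  by (simp add: stage_def Let_def)

lemma stage_snd: "\<exists>i. eligible Th thM n tau c m i \<Longrightarrow> s = chosen Th thM n tau c m \<Longrightarrow>
  snd (stage Th thM n tau m c) k = (if k = m then Th (thM (fst c s)) (zpos n m) tau else if s \<le> k \<and> k < m then snd c (Suc k) else snd c k)"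
  by (simp add: stage_def Let_def)

lemma stage_none: "\<not>(\<exists>i. eligible Th thM n tau c m i) \<Longrightarrow> stage Th thM n tau m c = c"
  by (simp add: stage_def)

definition srt :: "config \<Rightarrow> bool" where
  "srt c = (\<forall>i j. 1 \<le> i \<longrightarrow> i \<le> j \<longrightarrow> j \<le> n \<longrightarrow> snd c i \<le> snd c j)"

definition PP :: "real \<Rightarrow> config \<Rightarrow> nat \<Rightarrow> bool" where
  "PP tau c m = (\<forall>s. eligible Th thM n tau c m s \<longrightarrow> Th (thM (fst c s)) (zpos n m) tau \<le> snd c (Suc m))"

lemma stage_lower:
  assumes ex: "\<exists>i. eligible Th thM n tau c m i" and s: "s = chosen Th thM n tau c m"
  shows "snd c m \<le> Th (thM (fst c s)) (zpos n m) tau"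
proof -
  have e: "eligible Th thM n tau c m s" using chosen_props(1)[OF ex] s by simp
  show ?thesis
  proof (cases "s = m")
    case True thus ?thesis using e by (simp add: eligible_def wet_def)
  next
    case False
    hence "s < m" using e by (simp add: eligible_def)
    hence cond: "(\<not> wet Th thM n tau c m \<and> snd c m < Th (thM (fst c s)) (zpos n m) tau) \<or>
           (wet Th thM n tau c m \<and> thM (fst c s) > thM (fst c m))"
      using e unfolding eligible_def by blast
    thus ?thesis
    proof
      assume "wet Th thM n tau c m \<and> thM (fst c s) > thM (fst c m)"
      thus ?thesis using ThW[of "thM (fst c m)" "thM (fst c s)" "zpos n m" tau]
        by (simp add: wet_def)
    qed simp
  qed
qed

end

context sch begin

lemma stage_sorted:
  assumes m1: "1 \<le> m" and mn: "m \<le> n" and srt: "srt c" and pp: "m < n \<longrightarrow> PP tau c m"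
  shows "srt (stage Th thM n tau m c)"
proof (cases "\<exists>i. eligible Th thM n tau c m i")
  case False thus ?thesis using srt by (simp add: stage_none)
next
  case True
  define s where "s = chosen Th thM n tau c m"
  define w where "w = Th (thM (fst c s)) (zpos n m) tau"
  define g where "g = (\<lambda>k. if s \<le> k \<and> k < m then Suc k else k)"
  have sm: "1 \<le> s" "s \<le> m" using chosen_le[OF True] s_def by auto
  have v': "\<And>k. snd (stage Th thM n tau m c) k = (if k = m then w else snd c (g k))"
    using stage_snd[OF True s_def] unfolding w_def g_def by simp
  have low: "\<And>k. 1 \<le> k \<Longrightarrow> k \<le> m \<Longrightarrow> snd c k \<le> w"
  proof -
    fix k assume "1 \<le> k" "k \<le> m"
    hence "snd c k \<le> snd c m" using srt mn unfolding srt_def by blast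
    also have "\<dots> \<le> w" using stage_lower[OF True s_def] w_def by simp
    finally show "snd c k \<le> w" .
  qed
  have up: "\<And>k. m < k \<Longrightarrow> k \<le> n \<Longrightarrow> w \<le> snd c k"
  proof -
    fix k assume k: "m < k" "k \<le> n"
    have "eligible Th thM n tau c m s" using chosen_props(1)[OF True] s_def by simp
    hence "w \<le> snd c (Suc m)" using pp k unfolding PP_def w_def by auto
    also have "\<dots> \<le> snd c k" using srt k unfolding srt_def by auto
    finally show "w \<le> snd c k" .
  qed
  show ?thesis unfolding srt_def
  proof (intro allI impI)
    fix i j assume ij: "1 \<le> i" "i \<le> j" "j \<le> n"
    show "snd (stage Th thM n tau m c) i \<le> snd (stage Th thM n tau m c) j"
    proof (cases "i = m")
      case True
      show ?thesis
      proof (cases "j = m")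
        case False
        hence "m < j" using ij True by auto
        hence "g j = j" unfolding g_def by auto
        thus ?thesis using True False v' up[of j] ij \<open>m < j\<close> by simp
      qed (simp add: True)
    next
      case False
      show ?thesis
      proof (cases "j = m")
        case True
        have "g i \<le> m" "1 \<le> g i" using ij False True unfolding g_def by auto
        thus ?thesis using True False v' low by simp
      next
        case False2: False
        have "g i \<le> g j" "1 \<le> g i" "g j \<le> n" using ij False False2 mn unfolding g_def by auto
        thus ?thesis using False False2 v' srt unfolding srt_def by simp
      qed
    qed
  qed
qed

lemma PP_stage:
  assumes m1: "1 \<le> m" and mn: "Suc m \<le> n"
  shows "PP tau (stage Th thM n tau (Suc m) c) m"
  unfolding PP_def
proof (intro allI impI)
  fix s assume es: "eligible Th thM n tau (stage Th thM n tau (Suc m) c) m s"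
  show "Th (thM (fst (stage Th thM n tau (Suc m) c) s)) (zpos n m) tau \<le> snd (stage Th thM n tau (Suc m) c) (Suc m)"
  proof (cases "\<exists>i. eligible Th thM n tau c (Suc m) i")
    case False
    hence st: "stage Th thM n tau (Suc m) c = c" by (rule stage_none)
    have es': "eligible Th thM n tau c m s" using es st by simp
    have "\<not> eligible Th thM n tau c (Suc m) (Suc m)" using False by blast
    hence dry: "\<not> wet Th thM n tau c (Suc m)" by (simp add: eligible_def)
    have ne: "\<not> eligible Th thM n tau c (Suc m) s" using False by blast
    have "\<not> (\<forall>i. s < i \<and> i \<le> Suc m \<longrightarrow>
          ((\<not> wet Th thM n tau c i \<and> snd c i < Th (thM (fst c s)) (zpos n i) tau) \<or>
           (wet Th thM n tau c i \<and> thM (fst c s) > thM (fst c i))))"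
      using ne es' unfolding eligible_def by auto
    then obtain i where i: "s < i" "i \<le> Suc m" and nc: "\<not>((\<not> wet Th thM n tau c i \<and> snd c i < Th (thM (fst c s)) (zpos n i) tau) \<or>
           (wet Th thM n tau c i \<and> thM (fst c s) > thM (fst c i)))" by blast
    have "i = Suc m"
    proof (rule ccontr)
      assume "i \<noteq> Suc m" hence "i \<le> m" using i by auto
      thus False using es' i nc unfolding eligible_def by blast
    qed
    hence "Th (thM (fst c s)) (zpos n (Suc m)) tau \<le> snd c (Suc m)" using nc dry by auto
    moreover have "Th (thM (fst c s)) (zpos n m) tau \<le> Th (thM (fst c s)) (zpos n (Suc m)) tau"
      by (rule ThP_le) simp
    ultimately show ?thesis using st by simp
  next
    case True
    define s' where "s' = chosen Th thM n tau c (Suc m)"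
    have es': "eligible Th thM n tau c (Suc m) s'" using chosen_props(1)[OF True] s'_def by simp
    have mx: "\<And>j. eligible Th thM n tau c (Suc m) j \<Longrightarrow> thM (fst c j) \<le> thM (fst c s')"
      using chosen_props(2)[OF True] s'_def by simp
    have s'b: "1 \<le> s'" "s' \<le> Suc m" using chosen_le[OF True] s'_def by auto
    note F = stage_fst[OF True s'_def] and S = stage_snd[OF True s'_def]
    let ?c' = "stage Th thM n tau (Suc m) c"
    have sb: "1 \<le> s" "s \<le> m" and wet's: "wet Th thM n tau ?c' s"
      and cond': "\<And>i. s < i \<Longrightarrow> i \<le> m \<Longrightarrow>
          ((\<not> wet Th thM n tau ?c' i \<and> snd ?c' i < Th (thM (fst ?c' s)) (zpos n i) tau) \<or>
           (wet Th thM n tau ?c' i \<and> thM (fst ?c' s) > thM (fst ?c' i)))"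
      using es unfolding eligible_def by auto
    define ol where "ol = (if s' \<le> s then Suc s else s)"
    have po: "fst ?c' s = fst c ol" and vo: "snd ?c' s = snd c ol" using F S sb unfolding ol_def by auto
    have ob: "1 \<le> ol" "ol \<le> Suc m" "s \<le> ol" using sb unfolding ol_def by auto
    have key: "thM (fst c ol) \<le> thM (fst c s')"
    proof (rule ccontr)
      assume gt: "\<not> thM (fst c ol) \<le> thM (fst c s')"
      have wo: "wet Th thM n tau c ol"
      proof -
        have "snd c ol < Th (thM (fst c ol)) (zpos n s) tau" using wet's po vo by (simp add: wet_def)
        also have "\<dots> \<le> Th (thM (fst c ol)) (zpos n ol) tau" using ob by (intro ThP_le) simp
        finally show ?thesis by (simp add: wet_def)
      qed
      have "eligible Th thM n tau c (Suc m) ol"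
        unfolding eligible_def
      proof (intro conjI allI impI)
        show "1 \<le> ol" "ol \<le> Suc m" using ob by auto
        show "wet Th thM n tau c ol" by (rule wo)
        fix i assume i: "ol < i \<and> i \<le> Suc m"
        show "(\<not> wet Th thM n tau c i \<and> snd c i < Th (thM (fst c ol)) (zpos n i) tau) \<or>
           (wet Th thM n tau c i \<and> thM (fst c ol) > thM (fst c i))"
        proof (cases "s' < i")
          case True
          hence c2: "(\<not> wet Th thM n tau c i \<and> snd c i < Th (thM (fst c s')) (zpos n i) tau) \<or>
           (wet Th thM n tau c i \<and> thM (fst c s') > thM (fst c i))"
            using es' i unfolding eligible_def by blast
          have "Th (thM (fst c s')) (zpos n i) tau \<le> Th (thM (fst c ol)) (zpos n i) tau"
            using gt by (intro ThW_le) simp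
          thus ?thesis using c2 gt by auto
        next
          case False
          show ?thesis
          proof (cases "i = s'")
            case True
            have "wet Th thM n tau c s'" using es' unfolding eligible_def by blast
            thus ?thesis using True gt by auto
          next
            case False2: False
            hence "i < s'" using False by auto
            hence "ol = s" using i unfolding ol_def by auto
            hence si: "s < i" "i \<le> m" using i \<open>i < s'\<close> s'b by auto
            have eqs: "fst ?c' i = fst c i" "snd ?c' i = snd c i" using F S \<open>i < s'\<close> si by auto
            have "\<And>j. wet Th thM n tau ?c' j = (snd ?c' j < Th (thM (fst ?c' j)) (zpos n j) tau)"
              by (simp add: wet_def)
            thus ?thesis using cond'[OF si] eqs po \<open>ol = s\<close> by (simp add: wet_def)
          qed
        qed
      qed
      thus False using mx gt by auto
    qed
    have "Th (thM (fst ?c' s)) (zpos n m) tau \<le> Th (thM (fst c s')) (zpos n m) tau"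
      using key po by (intro ThW_le) simp
    also have "\<dots> \<le> Th (thM (fst c s')) (zpos n (Suc m)) tau" by (intro ThP_le) simp
    also have "\<dots> = snd ?c' (Suc m)" using S by simp
    finally show ?thesis .
  qed
qed

end

context sch begin

lemma stage_above:
  assumes "m < i" shows "fst (stage Th thM n tau m c) i = fst c i" "snd (stage Th thM n tau m c) i = snd c i"
proof -
  have "fst (stage Th thM n tau m c) i = fst c i \<and> snd (stage Th thM n tau m c) i = snd c i"
  proof (cases "\<exists>i. eligible Th thM n tau c m i")
    case True
    define s where "s = chosen Th thM n tau c m"
    show ?thesis using stage_fst[OF True s_def] stage_snd[OF True s_def] assms by auto
  qed (simp add: stage_none)
  thus "fst (stage Th thM n tau m c) i = fst c i" "snd (stage Th thM n tau m c) i = snd c i" by auto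
qed

lemma wet_above: "m < i \<Longrightarrow> wet Th thM n tau (stage Th thM n tau m c) i = wet Th thM n tau c i"
  using stage_above unfolding wet_def by simp

lemma stage_dry: "1 \<le> m \<Longrightarrow> \<not> wet Th thM n tau (stage Th thM n tau m c) m"
proof (cases "\<exists>i. eligible Th thM n tau c m i")
  case True
  define s where "s = chosen Th thM n tau c m"
  show ?thesis using stage_fst[OF True s_def] stage_snd[OF True s_def] by (simp add: wet_def)
next
  case False
  assume "1 \<le> m"
  hence "\<not> wet Th thM n tau c m" using False unfolding eligible_def by auto
  thus ?thesis using False by (simp add: stage_none)
qed

lemma sweep_dry:
  "m \<le> n \<Longrightarrow> (\<forall>i. m < i \<and> i \<le> n \<longrightarrow> \<not> wet Th thM n tau c i) \<Longrightarrow>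
    (\<forall>i. 0 < i \<and> i \<le> n \<longrightarrow> \<not> wet Th thM n tau (sweep Th thM n tau m c) i)"
proof (induction m arbitrary: c)
  case 0 thus ?case by simp
next
  case (Suc m)
  have "\<forall>i. m < i \<and> i \<le> n \<longrightarrow> \<not> wet Th thM n tau (stage Th thM n tau (Suc m) c) i"
  proof (intro allI impI)
    fix i assume i: "m < i \<and> i \<le> n"
    show "\<not> wet Th thM n tau (stage Th thM n tau (Suc m) c) i"
    proof (cases "i = Suc m")
      case True thus ?thesis using stage_dry by simp
    next
      case False thus ?thesis using wet_above[of "Suc m" i] Suc.prems i by auto
    qed
  qed
  thus ?case using Suc by simp
qed

lemma sweep_sorted:
  "m \<le> n \<Longrightarrow> srt c \<Longrightarrow> (0 < m \<and> m < n \<longrightarrow> PP tau c m) \<Longrightarrow> srt (sweep Th thM n tau m c)"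
proof (induction m arbitrary: c)
  case 0 thus ?case by simp
next
  case (Suc m)
  have "srt (stage Th thM n tau (Suc m) c)" using Suc.prems by (intro stage_sorted) auto
  moreover have "0 < m \<and> m < n \<longrightarrow> PP tau (stage Th thM n tau (Suc m) c) m"
    using PP_stage Suc.prems by auto
  ultimately show ?case using Suc by simp
qed

definition ms :: "config \<Rightarrow> config \<Rightarrow> bool" where
  "ms c c' = (\<forall>i. 1 \<le> i \<and> i \<le> n \<longrightarrow> (\<exists>i'. 1 \<le> i' \<and> i' \<le> n \<and> fst c' i' = fst c i \<and> snd c i \<le> snd c' i'))"

lemma ms_refl: "ms c c" unfolding ms_def by auto

lemma ms_trans: assumes ab: "ms a b" and bc: "ms b c" shows "ms a c"
  unfolding ms_def
proof (intro allI impI)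
  fix i assume i: "1 \<le> i \<and> i \<le> n"
  obtain i' where i': "1 \<le> i'" "i' \<le> n" "fst b i' = fst a i" "snd a i \<le> snd b i'"
    using ab i unfolding ms_def by blast
  obtain i'' where i'': "1 \<le> i''" "i'' \<le> n" "fst c i'' = fst b i'" "snd b i' \<le> snd c i''"
    using bc i' unfolding ms_def by blast
  show "\<exists>i''. 1 \<le> i'' \<and> i'' \<le> n \<and> fst c i'' = fst a i \<and> snd a i \<le> snd c i''"
    using i' i'' by (intro exI[of _ i'']) auto
qed

lemma ms_stage: assumes "m \<le> n" shows "ms c (stage Th thM n tau m c)"
proof (cases "\<exists>i. eligible Th thM n tau c m i")
  case True
  define s where "s = chosen Th thM n tau c m"
  note F = stage_fst[OF True s_def] and S = stage_snd[OF True s_def]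
  have sb: "1 \<le> s" "s \<le> m" using chosen_le[OF True] s_def by auto
  have lw: "snd c s \<le> Th (thM (fst c s)) (zpos n m) tau"
  proof -
    have "wet Th thM n tau c s" using chosen_props(1)[OF True] s_def unfolding eligible_def by simp
    hence "snd c s < Th (thM (fst c s)) (zpos n s) tau" by (simp add: wet_def)
    also have "\<dots> \<le> Th (thM (fst c s)) (zpos n m) tau" using sb by (intro ThP_le) simp
    finally show ?thesis by simp
  qed
  show ?thesis unfolding ms_def
  proof (intro allI impI)
    fix i assume i: "1 \<le> i \<and> i \<le> n"
    let ?c' = "stage Th thM n tau m c"
    show "\<exists>i'. 1 \<le> i' \<and> i' \<le> n \<and> fst ?c' i' = fst c i \<and> snd c i \<le> snd ?c' i'"
    proof (cases "i = s")
      case True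
      have "fst ?c' m = fst c i" "snd c i \<le> snd ?c' m" using F[of m] S[of m] lw True by simp_all
      moreover have "1 \<le> m" "m \<le> n" using sb assms by auto
      ultimately show ?thesis by blast
    next
      case False
      show ?thesis
      proof (cases "s < i \<and> i \<le> m")
        case True
        have a: "s \<le> i - 1 \<and> i - 1 < m" "i - 1 \<noteq> m" using True by auto
        have "fst ?c' (i - 1) = fst c i" "snd ?c' (i - 1) = snd c i"
          using F[of "i - 1"] S[of "i - 1"] a True by auto
        moreover have "1 \<le> i - 1" "i - 1 \<le> n" using True sb i by auto
        ultimately show ?thesis by (metis order_refl)
      next
        case False2: False
        have a: "i \<noteq> m" "\<not> (s \<le> i \<and> i < m)" using False False2 sb by auto
        have "fst ?c' i = fst c i" "snd ?c' i = snd c i"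
          using F[of i] S[of i] a by auto
        thus ?thesis using i by (metis order_refl)
      qed
    qed
  qed
qed (simp add: stage_none ms_refl)

lemma ms_sweep: "m \<le> n \<Longrightarrow> ms c (sweep Th thM n tau m c)"
proof (induction m arbitrary: c)
  case 0 thus ?case by (simp add: ms_refl)
next
  case (Suc m)
  have a: "ms c (stage Th thM n tau (Suc m) c)" using Suc.prems by (rule ms_stage)
  have "ms (stage Th thM n tau (Suc m) c) (sweep Th thM n tau m (stage Th thM n tau (Suc m) c))"
    using Suc by simp
  thus ?case using ms_trans[OF a] by simp
qed

definition pm :: "config \<Rightarrow> bool" where
  "pm c = bij_betw (fst c) {1..n} {1..n}"

lemma pm_stage: assumes "m \<le> n" "pm c" shows "pm (stage Th thM n tau m c)"
proof (cases "\<exists>i. eligible Th thM n tau c m i")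
  case True
  define s where "s = chosen Th thM n tau c m"
  note F = stage_fst[OF True s_def]
  have sb: "1 \<le> s" "s \<le> m" using chosen_le[OF True] s_def by auto
  define \<sigma> where "\<sigma> = (\<lambda>k. if k = m then s else if s \<le> k \<and> k < m then Suc k else k)"
  have fe: "fst (stage Th thM n tau m c) = fst c \<circ> \<sigma>" using F unfolding \<sigma>_def by auto
  have inj: "inj_on \<sigma> {1..n}" unfolding inj_on_def
  proof (intro ballI impI)
    fix x y assume "\<sigma> x = \<sigma> y"
    thus "x = y" unfolding \<sigma>_def using sb by (simp split: if_splits)
  qed
  have sub: "\<sigma> ` {1..n} \<subseteq> {1..n}" unfolding \<sigma>_def using sb assms(1) by auto
  have "\<sigma> ` {1..n} = {1..n}" using endo_inj_surj[OF _ sub inj] by simp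
  hence "bij_betw \<sigma> {1..n} {1..n}" using inj unfolding bij_betw_def by simp
  hence "bij_betw (fst c \<circ> \<sigma>) {1..n} {1..n}" using assms(2) unfolding pm_def
    by (rule bij_betw_trans)
  thus ?thesis unfolding pm_def fe .
qed (use assms in \<open>simp add: stage_none\<close>)

lemma pm_sweep: "m \<le> n \<Longrightarrow> pm c \<Longrightarrow> pm (sweep Th thM n tau m c)"
proof (induction m arbitrary: c)
  case 0 thus ?case by simp
next
  case (Suc m)
  have "pm (stage Th thM n tau (Suc m) c)" using Suc.prems by (intro pm_stage) auto
  thus ?case using Suc by simp
qed

lemma cfg_pm: "pm (cfg Th thM n dt th0 k)"
proof (induction k)
  case 0 thus ?case by (simp add: pm_def bij_betw_id[unfolded id_def])
next
  case (Suc k) thus ?case using pm_sweep[of n] by simp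
qed

lemma cfg_srt: "srt ((\<lambda>i. i), th0) \<Longrightarrow> srt (cfg Th thM n dt th0 k)"
  by (induction k) (auto intro: sweep_sorted)

lemma cfg_dry: "0 < i \<Longrightarrow> i \<le> n \<Longrightarrow> \<not> wet Th thM n (real (Suc k) * dt) (cfg Th thM n dt th0 (Suc k)) i"
proof -
  have "\<forall>i. n < i \<and> i \<le> n \<longrightarrow> \<not> wet Th thM n (real (Suc k) * dt) (cfg Th thM n dt th0 k) i" by auto
  from sweep_dry[OF order_refl this] show "0 < i \<Longrightarrow> i \<le> n \<Longrightarrow> ?thesis" by simp
qed

lemma cfg_ms: "k1 \<le> k2 \<Longrightarrow> ms (cfg Th thM n dt th0 k1) (cfg Th thM n dt th0 k2)"
proof (induction k2)
  case 0 thus ?case by (simp add: ms_refl)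
next
  case (Suc k2)
  show ?case
  proof (cases "k1 = Suc k2")
    case True thus ?thesis by (simp add: ms_refl)
  next
    case False
    hence a: "ms (cfg Th thM n dt th0 k1) (cfg Th thM n dt th0 k2)" using Suc by simp
    have "ms (cfg Th thM n dt th0 k2) (cfg Th thM n dt th0 (Suc k2))"
      using ms_sweep[of n "cfg Th thM n dt th0 k2"] by simp
    thus ?thesis by (rule ms_trans[OF a])
  qed
qed

end


lemma cell_bounds:
  assumes n: "1 \<le> n" and z: "0 \<le> z" "z < 1"
  shows "1 \<le> cell n z" "cell n z \<le> n" "z \<le> zpos n (cell n z)"
proof -
  have f0: "0 \<le> \<lfloor>z * real n\<rfloor>" using z n by simp
  have "z * real n < real n" using z n by simp
  hence f1: "\<lfloor>z * real n\<rfloor> < int n" by linarith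
  show "1 \<le> cell n z" unfolding cell_def by simp
  show "cell n z \<le> n" unfolding cell_def using f0 f1 by linarith
  have "real (cell n z) = real_of_int \<lfloor>z * real n\<rfloor> + 1" unfolding cell_def using f0 by simp
  hence "z * real n \<le> real (cell n z)" by linarith
  thus "z \<le> zpos n (cell n z)" unfolding zpos_def using n by (simp add: field_simps)
qed

lemma cell_mono: "z1 \<le> z2 \<Longrightarrow> cell n z1 \<le> cell n z2"
  unfolding cell_def by (simp add: floor_mono mult_right_mono nat_mono)

lemma cell_shift:
  assumes n: "1 \<le> n" and z: "0 \<le> z" and a: "1 \<le> a"
  shows "cell n (z - zpos n (cell n z) + zpos n a) = a"
proof -
  define f where "f = \<lfloor>z * real n\<rfloor>"
  have f0: "0 \<le> f" using z n unfolding f_def by simp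
  have rc: "real (cell n z) = real_of_int f + 1" unfolding cell_def f_def using f0 f_def by simp
  have "(z - zpos n (cell n z) + zpos n a) * real n = z * real n + real_of_int (int a - f - 1)"
    using n rc unfolding zpos_def by (simp add: field_simps)
  hence "\<lfloor>(z - zpos n (cell n z) + zpos n a) * real n\<rfloor> = f + (int a - f - 1)"
    unfolding f_def by (simp only: floor_add_int)
  thus ?thesis unfolding cell_def using a by simp
qed

lemma tindex_mono: "0 < dt \<Longrightarrow> t1 \<le> t2 \<Longrightarrow> tindex dt t1 \<le> tindex dt t2"
  unfolding tindex_def by (simp add: divide_right_mono floor_mono nat_mono)

context sch begin

lemma alpha_unique:
  assumes "pm c" "1 \<le> i" "i \<le> n" "fst c i = j"
  shows "alpha c n j = i"
  unfolding alpha_def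
proof (rule the_equality)
  show "1 \<le> i \<and> i \<le> n \<and> fst c i = j" using assms by simp
  fix i' assume "1 \<le> i' \<and> i' \<le> n \<and> fst c i' = j"
  hence "i' \<in> {1..n}" "fst c i' = fst c i" using assms by auto
  moreover have "i \<in> {1..n}" using assms by auto
  moreover have "inj_on (fst c) {1..n}" using assms(1) unfolding pm_def bij_betw_def by simp
  ultimately show "i' = i" unfolding inj_on_def by blast
qed

lemma alpha_props:
  assumes "pm c" "1 \<le> j" "j \<le> n"
  shows "1 \<le> alpha c n j" "alpha c n j \<le> n" "fst c (alpha c n j) = j"
proof -
  have "fst c ` {1..n} = {1..n}" using assms(1) unfolding pm_def bij_betw_def by simp
  hence "j \<in> fst c ` {1..n}" using assms(2,3) by simp
  then obtain i where i: "1 \<le> i" "i \<le> n" "fst c i = j" by auto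
  hence "alpha c n j = i" using alpha_unique[OF assms(1) i] by simp
  thus "1 \<le> alpha c n j" "alpha c n j \<le> n" "fst c (alpha c n j) = j" using i by auto
qed

end


theorem corollary3p3:
  fixes Qsat Th :: "real \<Rightarrow> real \<Rightarrow> real \<Rightarrow> real"
    and T dt :: real and n :: nat and th0 q0 :: "nat \<Rightarrow> real"
  assumes dQ_theta: "\<And>th z t. \<exists>d>0. ((\<lambda>s. Qsat s z t) has_real_derivative d) (at th)"
    and dQ_z: "\<And>th z t. \<exists>d<0. ((\<lambda>s. Qsat th s t) has_real_derivative d) (at z)"
    and Th_solves: "\<And>w z t. Th w z t + Qsat (Th w z t) z t = w"
    and dTh_w: "\<And>w z t. \<exists>d>0. ((\<lambda>s. Th s z t) has_real_derivative d) (at w)"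
    and dTh_z: "\<And>w z t. \<exists>d>0. ((\<lambda>s. Th w s t) has_real_derivative d) (at z)"
    and T_pos: "T > 0" and n_pos: "n \<ge> 1" and dt_pos: "dt > 0"
    and th0_mono: "\<And>i j. 1 \<le> i \<Longrightarrow> i \<le> j \<Longrightarrow> j \<le> n \<Longrightarrow> th0 i \<le> th0 j"
    and q0_le: "\<And>j. 1 \<le> j \<Longrightarrow> j \<le> n \<Longrightarrow> q0 j \<le> Qsat (th0 j) (zpos n j) 0"
  defines "thM \<equiv> (\<lambda>j. th0 j + q0 j)"
  shows
    "(\<forall>t z1 z2. 0 \<le> t \<and> t < T \<and> 0 \<le> z1 \<and> z1 \<le> z2 \<and> z2 < 1 \<longrightarrow>
        theta_n Th thM n dt th0 t z1 \<le> theta_n Th thM n dt th0 t z2)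
     \<and> (\<forall>t z. 0 \<le> t \<and> t < T \<and> 0 \<le> z \<and> z < 1 \<longrightarrow>
        theta_n Th thM n dt th0 t (F_n Th thM n dt th0 t z)
          + q_n Th thM n dt th0 t (F_n Th thM n dt th0 t z)
        = theta0_n n th0 z + q0_n n q0 z)
     \<and> (\<forall>z t1 t2. 0 \<le> z \<and> z < 1 \<and> 0 \<le> t1 \<and> t1 \<le> t2 \<and> t2 < T \<longrightarrow>
        theta_n Th thM n dt th0 t1 (F_n Th thM n dt th0 t1 z)
          \<le> theta_n Th thM n dt th0 t2 (F_n Th thM n dt th0 t2 z))
     \<and> (\<forall>t z. 0 \<le> t \<and> t < T \<and> 0 \<le> z \<and> z < 1 \<longrightarrow>
        q_n Th thM n dt th0 t z
          \<le> Qsat (theta_n Th thM n dt th0 t z) z (real (tindex dt t) * dt))"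
proof -
  have ThW: "\<And>a b z t. a < b \<Longrightarrow> Th a z t < Th b z t"
  proof -
    fix a b z t :: real assume "a < b"
    thus "Th a z t < Th b z t"
      by (rule DERIV_pos_imp_increasing[where f = "\<lambda>s. Th s z t"]) (use dTh_w in blast)
  qed
  have ThZ: "\<And>w z1 z2 t. z1 < z2 \<Longrightarrow> Th w z1 t < Th w z2 t"
  proof -
    fix w z1 z2 t :: real assume "z1 < z2"
    thus "Th w z1 t < Th w z2 t"
      by (rule DERIV_pos_imp_increasing[where f = "\<lambda>s. Th w s t"]) (use dTh_z in blast)
  qed
  have fmono: "\<And>x y z t. x \<le> y \<Longrightarrow> x + Qsat x z t \<le> y + Qsat y z t"
  proof -
    fix x y z t :: real assume xy: "x \<le> y"
    show "x + Qsat x z t \<le> y + Qsat y z t"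
    proof (cases "x = y")
      case False
      hence "x < y" using xy by simp
      have "x + Qsat x z t < y + Qsat y z t"
      proof (rule DERIV_pos_imp_increasing[where f = "\<lambda>s. s + Qsat s z t", OF \<open>x < y\<close>])
        fix s :: real
        obtain d where d: "d > 0" "((\<lambda>s. Qsat s z t) has_real_derivative d) (at s)" using dQ_theta by blast
        have "((\<lambda>s. s + Qsat s z t) has_real_derivative (1 + d)) (at s)"
          by (rule DERIV_add[OF DERIV_ident d(2)])
        thus "\<exists>y. ((\<lambda>s. s + Qsat s z t) has_real_derivative y) (at s) \<and> 0 < y" using d(1)
          by (intro exI[of _ "1 + d"]) simp
      qed
      thus ?thesis by simp
    qed simp
  qed
  have Qz: "\<And>th z1 z2 t. z1 \<le> z2 \<Longrightarrow> Qsat th z2 t \<le> Qsat th z1 t"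
  proof -
    fix th z1 z2 t :: real assume zz: "z1 \<le> z2"
    show "Qsat th z2 t \<le> Qsat th z1 t"
    proof (cases "z1 = z2")
      case False
      hence "z1 < z2" using zz by simp
      have "Qsat th z1 t > Qsat th z2 t"
        by (rule DERIV_neg_imp_decreasing[where f = "\<lambda>s. Qsat th s t", OF \<open>z1 < z2\<close>]) (use dQ_z in blast)
      thus ?thesis by simp
    qed simp
  qed
  interpret sch Th thM n using ThW ThZ n_pos by unfold_locales auto
  let ?C = "cfg Th thM n dt th0"
  have srt0: "srt ((\<lambda>i. i), th0)" unfolding srt_def using th0_mono by simp
  have srtC: "\<And>k. srt (?C k)" by (rule cfg_srt[OF srt0])
  have pmC: "\<And>k. pm (?C k)" by (rule cfg_pm)
  have P1: "\<forall>t z1 z2. 0 \<le> t \<and> t < T \<and> 0 \<le> z1 \<and> z1 \<le> z2 \<and> z2 < 1 \<longrightarrow>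
        theta_n Th thM n dt th0 t z1 \<le> theta_n Th thM n dt th0 t z2"
  proof (intro allI impI)
    fix t z1 z2 :: real assume h: "0 \<le> t \<and> t < T \<and> 0 \<le> z1 \<and> z1 \<le> z2 \<and> z2 < 1"
    have "1 \<le> cell n z1" "cell n z1 \<le> cell n z2" "cell n z2 \<le> n"
      using cell_bounds[OF n_pos] cell_mono h by auto
    thus "theta_n Th thM n dt th0 t z1 \<le> theta_n Th thM n dt th0 t z2"
      using srtC unfolding theta_n_def srt_def by blast
  qed
  have FF: "\<And>t z. 0 \<le> z \<Longrightarrow> z < 1 \<Longrightarrow>
      cell n (F_n Th thM n dt th0 t z) = alpha (?C (tindex dt t)) n (cell n z)"
  proof -
    fix t z :: real assume z: "0 \<le> z" "z < 1"
    have "1 \<le> alpha (?C (tindex dt t)) n (cell n z)"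
      using alpha_props(1)[OF pmC] cell_bounds[OF n_pos z] by blast
    thus "?thesis t z" unfolding F_n_def Let_def using cell_shift[OF n_pos z(1)] by simp
  qed
  have P2: "\<forall>t z. 0 \<le> t \<and> t < T \<and> 0 \<le> z \<and> z < 1 \<longrightarrow>
        theta_n Th thM n dt th0 t (F_n Th thM n dt th0 t z)
          + q_n Th thM n dt th0 t (F_n Th thM n dt th0 t z)
        = theta0_n n th0 z + q0_n n q0 z"
  proof (intro allI impI)
    fix t z :: real assume h: "0 \<le> t \<and> t < T \<and> 0 \<le> z \<and> z < 1"
    let ?c = "?C (tindex dt t)"
    have j: "1 \<le> cell n z" "cell n z \<le> n" using cell_bounds[OF n_pos] h by auto
    have "fst ?c (alpha ?c n (cell n z)) = cell n z" using alpha_props(3)[OF pmC j] .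
    thus "theta_n Th thM n dt th0 t (F_n Th thM n dt th0 t z)
          + q_n Th thM n dt th0 t (F_n Th thM n dt th0 t z)
        = theta0_n n th0 z + q0_n n q0 z"
      unfolding theta_n_def q_n_def theta0_n_def q0_n_def Let_def FF[of z t, OF conjunct1[OF conjunct2[OF conjunct2[OF h]]] conjunct2[OF conjunct2[OF conjunct2[OF h]]]]
      by (simp add: thM_def)
  qed
  have P3: "\<forall>z t1 t2. 0 \<le> z \<and> z < 1 \<and> 0 \<le> t1 \<and> t1 \<le> t2 \<and> t2 < T \<longrightarrow>
        theta_n Th thM n dt th0 t1 (F_n Th thM n dt th0 t1 z)
          \<le> theta_n Th thM n dt th0 t2 (F_n Th thM n dt th0 t2 z)"
  proof (intro allI impI)
    fix z t1 t2 :: real assume h: "0 \<le> z \<and> z < 1 \<and> 0 \<le> t1 \<and> t1 \<le> t2 \<and> t2 < T"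
    have z: "0 \<le> z" "z < 1" using h by auto
    let ?c1 = "?C (tindex dt t1)" and ?c2 = "?C (tindex dt t2)"
    have j: "1 \<le> cell n z" "cell n z \<le> n" using cell_bounds[OF n_pos z] by auto
    have k: "tindex dt t1 \<le> tindex dt t2" using tindex_mono dt_pos h by blast
    have ms12: "ms ?c1 ?c2" by (rule cfg_ms[OF k])
    define a1 where "a1 = alpha ?c1 n (cell n z)"
    have a1: "1 \<le> a1" "a1 \<le> n" "fst ?c1 a1 = cell n z" using alpha_props[OF pmC j] a1_def by auto
    obtain i' where i': "1 \<le> i'" "i' \<le> n" "fst ?c2 i' = fst ?c1 a1" "snd ?c1 a1 \<le> snd ?c2 i'"
      using ms12 a1 unfolding ms_def by blast
    have "alpha ?c2 n (cell n z) = i'" using alpha_unique[OF pmC[of "tindex dt t2"] i'(1,2)] i'(3) a1(3) by simp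
    thus "theta_n Th thM n dt th0 t1 (F_n Th thM n dt th0 t1 z)
          \<le> theta_n Th thM n dt th0 t2 (F_n Th thM n dt th0 t2 z)"
      unfolding theta_n_def FF[OF z] using i'(4) a1_def by simp
  qed
  have P4: "\<forall>t z. 0 \<le> t \<and> t < T \<and> 0 \<le> z \<and> z < 1 \<longrightarrow>
        q_n Th thM n dt th0 t z
          \<le> Qsat (theta_n Th thM n dt th0 t z) z (real (tindex dt t) * dt)"
  proof (intro allI impI)
    fix t z :: real assume h: "0 \<le> t \<and> t < T \<and> 0 \<le> z \<and> z < 1"
    have z: "0 \<le> z" "z < 1" using h by auto
    define i where "i = cell n z"
    have ib: "1 \<le> i" "i \<le> n" "z \<le> zpos n i" using cell_bounds[OF n_pos z] i_def by auto
    define k where "k = tindex dt t"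
    let ?c = "?C k"
    have main: "thM (fst ?c i) - snd ?c i \<le> Qsat (snd ?c i) (zpos n i) (real k * dt)"
    proof (cases k)
      case 0
      thus ?thesis using q0_le[OF ib(1,2)] by (simp add: thM_def)
    next
      case (Suc k')
      have "\<not> wet Th thM n (real (Suc k') * dt) (?C (Suc k')) i" using cfg_dry ib by simp
      hence le: "Th (thM (fst ?c i)) (zpos n i) (real k * dt) \<le> snd ?c i"
        unfolding wet_def Suc by simp
      have "thM (fst ?c i) \<le> snd ?c i + Qsat (snd ?c i) (zpos n i) (real k * dt)"
        using fmono[OF le, of "zpos n i" "real k * dt"] Th_solves by simp
      thus ?thesis by simp
    qed
    also have "\<dots> \<le> Qsat (snd ?c i) z (real k * dt)" by (rule Qz[OF ib(3)])
    finally show "q_n Th thM n dt th0 t z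
          \<le> Qsat (theta_n Th thM n dt th0 t z) z (real (tindex dt t) * dt)"
      unfolding q_n_def theta_n_def Let_def i_def k_def by simp
  qed
  show ?thesis using P1 P2 P3 P4 by blast
qed

end
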